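(* Let $D\subseteq\mathbb{R}^3\setminus\{0\}$ be open, $\Omega=\mathbb{R}^3\times D$, and $\vec\mu(\vec M,\vec\gamma)=(0,0,\mu_3(\vec\gamma,\vec M\cdot\vec\gamma))$ with $\mu_3:D\times\mathbb{R}\to\mathbb{R}$ smooth. Then $\Pi_{\vec\mu}$ defines a Poisson bracket on $\Omega$ if and only if $\gamma_1\frac{\partial\mu_3}{\partial\gamma_2}-\gamma_2\frac{\partial\mu_3}{\partial\gamma_1}=0$ on $D\times\mathbb{R}$ (derivatives with $s=\vec M\cdot\vec\gamma$ held fixed). Moreover, if $\mu_3=\beta(\gamma_3)\delta(s)$ with $\beta$, $\delta$ smooth and $\delta$ nowhere zero, then $\Pi_{\vec\mu}$ defines a Poisson bracket and $C=\Delta(\vec M\cdot\vec\gamma)+B(\gamma_3)$, where $\Delta'=1/\delta$ and $B'=\beta$, is a Casimir function of $\Pi_{\vec\mu}$.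
   Context: Coordinates on $\mathbb{R}^6$ are $(\vec M,\vec\gamma)=(M_1,M_2,M_3,\gamma_1,\gamma_2,\gamma_3)$. For a smooth $\vec\mu=(\mu_1,\mu_2,\mu_3)$ of $(\vec M,\vec\gamma)$, $\Pi_{\vec\mu}$ is the skew-symmetric $6\times6$ matrix $$\Pi_{\vec\mu}=\begin{bmatrix}0&-M_3-\mu_3&M_2+\mu_2&0&-\gamma_3&\gamma_2\\ M_3+\mu_3&0&-M_1-\mu_1&\gamma_3&0&-\gamma_1\\ -M_2-\mu_2&M_1+\mu_1&0&-\gamma_2&\gamma_1&0\\ 0&-\gamma_3&\gamma_2&0&0&0\\ \gamma_3&0&-\gamma_1&0&0&0\\ -\gamma_2&\gamma_1&0&0&0&0\end{bmatrix},$$ it "defines a Poisson bracket" if $\{f,g\}_{\vec\mu}=(\nabla f)^T\Pi_{\vec\mu}\nabla g$ satisfies the Jacobi identity, and a Casimir function is a smooth $C$ with $\Pi_{\vec\mu}\nabla C=0$. *)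

theory Defs
  imports "HOL-Analysis.Analysis"
begin

text \<open>Points of R^6 are pairs (M, gamma) of vectors in R^3.
  C^k and C^infinity (smooth) real functions on an open set, via iterated
  partial (Frechet directional) derivatives along the standard basis.\<close>

fun Ck_on :: "nat \<Rightarrow> 'a::euclidean_space set \<Rightarrow> ('a \<Rightarrow> real) \<Rightarrow> bool" where
  "Ck_on 0 S f = continuous_on S f"
| "Ck_on (Suc k) S f =
     ((\<forall>x\<in>S. f differentiable (at x)) \<and>
      (\<forall>b\<in>Basis. Ck_on k S (\<lambda>x. frechet_derivative f (at x) b)))"

definition smooth_on :: "'a::euclidean_space set \<Rightarrow> ('a \<Rightarrow> real) \<Rightarrow> bool" where
  "smooth_on S f \<longleftrightarrow> (\<forall>k. Ck_on k S f)"

definition e6 :: "nat \<Rightarrow> (real^3) \<times> (real^3)" where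
  "e6 i = [(vector [1,0,0], 0), (vector [0,1,0], 0), (vector [0,0,1], 0),
           (0, vector [1,0,0]), (0, vector [0,1,0]), (0, vector [0,0,1])] ! i"

definition pd :: "nat \<Rightarrow> ((real^3) \<times> (real^3) \<Rightarrow> real) \<Rightarrow> (real^3) \<times> (real^3) \<Rightarrow> real" where
  "pd i f x = frechet_derivative f (at x) (e6 i)"

definition Pi_mu :: "((real^3) \<times> (real^3) \<Rightarrow> real^3) \<Rightarrow> (real^3) \<times> (real^3) \<Rightarrow> real list list" where
  "Pi_mu mu p = (let M = fst p; g = snd p; m = mu p in
     [[0, -(M$3) - m$3, M$2 + m$2, 0, -(g$3), g$2],
      [M$3 + m$3, 0, -(M$1) - m$1, g$3, 0, -(g$1)],
      [-(M$2) - m$2, M$1 + m$1, 0, -(g$2), g$1, 0],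
      [0, -(g$3), g$2, 0, 0, 0],
      [g$3, 0, -(g$1), 0, 0, 0],
      [-(g$2), g$1, 0, 0, 0, 0]])"

definition pbracket ::
  "((real^3) \<times> (real^3) \<Rightarrow> real^3) \<Rightarrow> ((real^3) \<times> (real^3) \<Rightarrow> real) \<Rightarrow> ((real^3) \<times> (real^3) \<Rightarrow> real)
     \<Rightarrow> (real^3) \<times> (real^3) \<Rightarrow> real" where
  "pbracket mu f g x = (\<Sum>i<6. \<Sum>j<6. pd i f x * (Pi_mu mu x ! i ! j) * pd j g x)"

definition defines_poisson :: "((real^3) \<times> (real^3) \<Rightarrow> real^3) \<Rightarrow> ((real^3) \<times> (real^3)) set \<Rightarrow> bool" where
  "defines_poisson mu \<Omega> \<longleftrightarrow>
     (\<forall>f g h. smooth_on \<Omega> f \<and> smooth_on \<Omega> g \<and> smooth_on \<Omega> h \<longrightarrow>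
        (\<forall>x\<in>\<Omega>. pbracket mu f (pbracket mu g h) x + pbracket mu g (pbracket mu h f) x
                 + pbracket mu h (pbracket mu f g) x = 0))"

definition casimir :: "((real^3) \<times> (real^3) \<Rightarrow> real^3) \<Rightarrow> ((real^3) \<times> (real^3)) set
     \<Rightarrow> ((real^3) \<times> (real^3) \<Rightarrow> real) \<Rightarrow> bool" where
  "casimir mu \<Omega> C \<longleftrightarrow> smooth_on \<Omega> C \<and>
     (\<forall>x\<in>\<Omega>. \<forall>i<6. (\<Sum>j<6. (Pi_mu mu x ! i ! j) * pd j C x) = 0)"

end

theory Submission
  imports Defs
begin


lemma fd_eq: "(f has_derivative f') (at x) \<Longrightarrow> frechet_derivative f (at x) = f'"
  by (simp add: frechet_derivative_at[symmetric])

lemma Ck_mono: "Ck_on (Suc k) S f \<Longrightarrow> Ck_on k S f"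
proof (induction k arbitrary: f)
  case 0
  then show ?case
    by (auto intro!: continuous_at_imp_continuous_on differentiable_imp_continuous_within)
next
  case (Suc k)
  then show ?case by auto
qed

lemma Ck_le_add: "Ck_on (k + d) S f \<Longrightarrow> Ck_on k S f"
proof (induction d)
  case (Suc d) then show ?case using Ck_mono[of "k+d" S f] by (simp del: Ck_on.simps)
qed simp

lemma Ck_le: "k \<le> m \<Longrightarrow> Ck_on m S f \<Longrightarrow> Ck_on k S f"
  using Ck_le_add by (metis le_add_diff_inverse)

lemma smooth_Ck: "smooth_on S f \<Longrightarrow> Ck_on k S f"
  by (simp add: smooth_on_def)

lemma fd_transform:
  assumes "open S" "x \<in> S" "\<And>y. y \<in> S \<Longrightarrow> f y = g y" "f differentiable (at x)"
  shows "frechet_derivative g (at x) = frechet_derivative f (at x)"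
    "g differentiable (at x)"
proof -
  have "(f has_derivative frechet_derivative f (at x)) (at x)"
    using assms(4) frechet_derivative_works by blast
  then have "(g has_derivative frechet_derivative f (at x)) (at x)"
    using has_derivative_transform_within_open assms(1-3) by blast
  then show "frechet_derivative g (at x) = frechet_derivative f (at x)"
    "g differentiable (at x)" by (auto simp: fd_eq differentiable_def)
qed

lemma Ck_cong: "open S \<Longrightarrow> (\<And>x. x\<in>S \<Longrightarrow> f x = g x) \<Longrightarrow> Ck_on k S f \<Longrightarrow> Ck_on k S g"
proof (induction k arbitrary: f g)
  case 0
  then show ?case using continuous_on_cong by (metis Ck_on.simps(1))
next
  case (Suc k)
  have d: "\<forall>x\<in>S. g differentiable (at x)"
  proof
    fix x assume "x \<in> S"
    then show "g differentiable (at x)" using fd_transform(2)[of S x f g] Suc.prems by auto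
  qed
  have "Ck_on k S (\<lambda>x. frechet_derivative g (at x) b)" if "b \<in> Basis" for b
  proof (rule Suc.IH[of "\<lambda>x. frechet_derivative f (at x) b"])
    show "Ck_on k S (\<lambda>x. frechet_derivative f (at x) b)" using Suc.prems that by auto
    fix x assume "x \<in> S"
    then show "frechet_derivative f (at x) b = frechet_derivative g (at x) b"
      using fd_transform(1)[of S x f g] Suc.prems by auto
  qed (use Suc.prems in auto)
  then show ?case using d by simp
qed

lemma Ck_const: "Ck_on k S (\<lambda>x. c)"
proof (induction k arbitrary: c)
  case 0 then show ?case by simp
next
  case (Suc k)
  have "(\<lambda>x. frechet_derivative (\<lambda>x. c) (at x) b) = (\<lambda>x. 0)" for b
    by (rule ext) (simp add: fd_eq)
  then show ?case using Suc by simp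
qed

lemma Ck_inner: "Ck_on k S (\<lambda>x. x \<bullet> w)"
proof (cases k)
  case 0 then show ?thesis by (simp add: continuous_on_inner continuous_on_id continuous_on_const)
next
  case (Suc m)
  have hd: "((\<lambda>x. x \<bullet> w) has_derivative (\<lambda>h. h \<bullet> w)) (at x)" for x
    by (auto intro!: derivative_eq_intros)
  then have "(\<lambda>x. frechet_derivative (\<lambda>x. x \<bullet> w) (at x) b) = (\<lambda>x. b \<bullet> w)" for b
    by (intro ext) (simp add: fd_eq[OF hd])
  then show ?thesis using Suc hd Ck_const by (auto simp: differentiable_def)
qed

lemma Ck_add: "open S \<Longrightarrow> Ck_on k S f \<Longrightarrow> Ck_on k S g \<Longrightarrow> Ck_on k S (\<lambda>x. f x + g x)"
proof (induction k arbitrary: f g)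
  case 0 then show ?case by (simp add: continuous_on_add)
next
  case (Suc k)
  have "Ck_on k S (\<lambda>x. frechet_derivative (\<lambda>x. f x + g x) (at x) b)" if "b \<in> Basis" for b
  proof -
    have "Ck_on k S (\<lambda>x. frechet_derivative f (at x) b + frechet_derivative g (at x) b)"
      using Suc.prems that by (intro Suc.IH[of "\<lambda>x. frechet_derivative f (at x) b" "\<lambda>x. frechet_derivative g (at x) b"]) auto
    moreover have "frechet_derivative f (at x) b + frechet_derivative g (at x) b
        = frechet_derivative (\<lambda>x. f x + g x) (at x) b" if "x \<in> S" for x
    proof -
      have "(f has_derivative frechet_derivative f (at x)) (at x)" "(g has_derivative frechet_derivative g (at x)) (at x)"
        using Suc.prems that by (auto simp: frechet_derivative_works[symmetric])
      then have "((\<lambda>x. f x + g x) has_derivative (\<lambda>h. frechet_derivative f (at x) h + frechet_derivative g (at x) h)) (at x)"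
        by (rule has_derivative_add)
      then show ?thesis by (simp add: fd_eq)
    qed
    ultimately show ?thesis by (rule Ck_cong[OF Suc.prems(1), rotated])
  qed
  moreover have "\<forall>x\<in>S. (\<lambda>x. f x + g x) differentiable (at x)" using Suc.prems by (auto intro: differentiable_add)
  ultimately show ?case by simp
qed

lemma Ck_mult: "open S \<Longrightarrow> Ck_on k S f \<Longrightarrow> Ck_on k S g \<Longrightarrow> Ck_on k S (\<lambda>x. f x * g x)"
proof (induction k arbitrary: f g)
  case 0 then show ?case by (simp add: continuous_on_mult)
next
  case (Suc k)
  have "Ck_on k S (\<lambda>x. frechet_derivative (\<lambda>x. f x * g x) (at x) b)" if "b \<in> Basis" for b
  proof -
    have "Ck_on k S (\<lambda>x. f x * frechet_derivative g (at x) b + frechet_derivative f (at x) b * g x)"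
    proof (rule Ck_add[OF Suc.prems(1)])
      show "Ck_on k S (\<lambda>x. f x * frechet_derivative g (at x) b)"
        using Suc.prems that Ck_mono[of k S f] by (intro Suc.IH) auto
      show "Ck_on k S (\<lambda>x. frechet_derivative f (at x) b * g x)"
        using Suc.prems that Ck_mono[of k S g] by (intro Suc.IH) auto
    qed
    moreover have "f x * frechet_derivative g (at x) b + frechet_derivative f (at x) b * g x
        = frechet_derivative (\<lambda>x. f x * g x) (at x) b" if "x \<in> S" for x
    proof -
      have "(f has_derivative frechet_derivative f (at x)) (at x)" "(g has_derivative frechet_derivative g (at x)) (at x)"
        using Suc.prems that by (auto simp: frechet_derivative_works[symmetric])
      then have "((\<lambda>x. f x * g x) has_derivative (\<lambda>h. f x * frechet_derivative g (at x) h + frechet_derivative f (at x) h * g x)) (at x)"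
        by (rule has_derivative_mult)
      then show ?thesis by (simp add: fd_eq)
    qed
    ultimately show ?thesis by (rule Ck_cong[OF Suc.prems(1), rotated])
  qed
  moreover have "\<forall>x\<in>S. (\<lambda>x. f x * g x) differentiable (at x)" using Suc.prems by (auto intro: differentiable_mult)
  ultimately show ?case by simp
qed

lemma lin_real: "linear (L::real \<Rightarrow> real) \<Longrightarrow> L t = t * L 1"
  by (metis linear_scale mult.right_neutral real_scaleR_def mult.commute)

lemma Ck_compose:
  fixes \<phi> :: "real \<Rightarrow> real"
  shows "open S \<Longrightarrow> Ck_on k UNIV \<phi> \<Longrightarrow> Ck_on k S \<psi> \<Longrightarrow> Ck_on k S (\<lambda>x. \<phi> (\<psi> x))"
proof (induction k arbitrary: \<phi> \<psi>)
  case 0 then show ?case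
    by (simp add: continuous_on_compose2[of UNIV \<phi> S \<psi>])
next
  case (Suc k)
  define \<phi>' where "\<phi>' = (\<lambda>t. frechet_derivative \<phi> (at t) 1)"
  have p': "Ck_on k UNIV \<phi>'" using Suc.prems(2) by (simp add: \<phi>'_def Basis_real_def)
  have "Ck_on k S (\<lambda>x. frechet_derivative (\<lambda>x. \<phi> (\<psi> x)) (at x) b)" if "b \<in> Basis" for b
  proof -
    have "Ck_on k S (\<lambda>x. \<phi>' (\<psi> x) * frechet_derivative \<psi> (at x) b)"
      using Suc.prems that p' Ck_mono[of k S \<psi>] by (intro Ck_mult Suc.IH[of \<phi>' \<psi>]) auto
    moreover have "\<phi>' (\<psi> x) * frechet_derivative \<psi> (at x) b
        = frechet_derivative (\<lambda>x. \<phi> (\<psi> x)) (at x) b" if "x \<in> S" for x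
    proof -
      have "(\<psi> has_derivative frechet_derivative \<psi> (at x)) (at x)"
        "(\<phi> has_derivative frechet_derivative \<phi> (at (\<psi> x))) (at (\<psi> x))"
        using Suc.prems that by (auto simp: frechet_derivative_works[symmetric])
      from diff_chain_at[OF this] 
      have "((\<lambda>x. \<phi> (\<psi> x)) has_derivative (\<lambda>h. frechet_derivative \<phi> (at (\<psi> x)) (frechet_derivative \<psi> (at x) h))) (at x)"
        by (simp add: o_def)
      moreover have "linear (frechet_derivative \<phi> (at (\<psi> x)))"
        using Suc.prems(2) linear_frechet_derivative by auto
      ultimately show ?thesis using lin_real[of "frechet_derivative \<phi> (at (\<psi> x))" "frechet_derivative \<psi> (at x) b"]
        by (simp add: fd_eq \<phi>'_def mult.commute)
    qed
    ultimately show ?thesis by (rule Ck_cong[OF Suc.prems(1), rotated])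
  qed
  moreover have "\<forall>x\<in>S. (\<lambda>x. \<phi> (\<psi> x)) differentiable (at x)" using Suc.prems
    using differentiable_chain_at[of \<psi> _ \<phi>] by (auto simp: o_def)
  ultimately show ?case by simp
qed

lemma deriv_real_fd:
  fixes \<delta> :: "real \<Rightarrow> real"
  assumes "\<delta> differentiable (at x)"
  shows "(\<delta> has_real_derivative frechet_derivative \<delta> (at x) 1) (at x)"
proof -
  have h: "(\<delta> has_derivative frechet_derivative \<delta> (at x)) (at x)"
    using assms frechet_derivative_works by blast
  have "linear (frechet_derivative \<delta> (at x))" using assms linear_frechet_derivative by blast
  then have "frechet_derivative \<delta> (at x) = (*) (frechet_derivative \<delta> (at x) 1)"
    by (intro ext) (metis lin_real mult.commute)
  then show ?thesis using h by (simp add: has_field_derivative_def)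
qed

lemma fd_real_deriv:
  fixes \<delta> :: "real \<Rightarrow> real"
  assumes "(\<delta> has_real_derivative d) (at x)"
  shows "frechet_derivative \<delta> (at x) b = b * d" "\<delta> differentiable (at x)"
  using assms by (auto simp: has_field_derivative_def fd_eq differentiable_def mult.commute)

lemma Ck_inverse:
  fixes \<delta> :: "real \<Rightarrow> real"
  assumes nz: "\<forall>t. \<delta> t \<noteq> 0"
  shows "Ck_on k UNIV \<delta> \<Longrightarrow> Ck_on k UNIV (\<lambda>t. 1 / \<delta> t)"
proof (induction k)
  case 0
  then have "continuous_on UNIV \<delta>" by simp
  then show ?case using nz by (simp add: continuous_on_divide)
next
  case (Suc k)
  have ih: "Ck_on k UNIV (\<lambda>t. 1 / \<delta> t)" by (rule Suc.IH[OF Ck_mono[OF Suc.prems]])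
  have dd: "((\<lambda>t. 1 / \<delta> t) has_real_derivative
      - (frechet_derivative \<delta> (at x) 1 * inverse (\<delta> x ^ 2))) (at x)" for x
  proof -
    have "\<delta> differentiable (at x)" using Suc.prems by simp
    from DERIV_inverse_fun[OF deriv_real_fd[OF this] nz[rule_format, of x]]
    show ?thesis by (simp add: divide_inverse power2_eq_square inverse_mult_distrib)
  qed
  have "Ck_on k UNIV (\<lambda>x. frechet_derivative (\<lambda>t. 1 / \<delta> t) (at x) b)" if "b \<in> Basis" for b
  proof -
    have b1: "b = 1" using that by (simp add: Basis_real_def)
    have c1: "Ck_on k UNIV (\<lambda>x. (-1) * frechet_derivative \<delta> (at x) 1)"
      by (rule Ck_mult[OF _ Ck_const]) (use Suc.prems in auto)
    have c2: "Ck_on k UNIV (\<lambda>x. (1 / \<delta> x) * (1 / \<delta> x))"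
      by (rule Ck_mult[OF _ ih ih]) simp
    have "Ck_on k UNIV (\<lambda>x. ((-1) * frechet_derivative \<delta> (at x) 1) * ((1 / \<delta> x) * (1 / \<delta> x)))"
      by (rule Ck_mult[OF _ c1 c2]) simp
    moreover have "((-1) * frechet_derivative \<delta> (at x) 1) * ((1 / \<delta> x) * (1 / \<delta> x))
        = frechet_derivative (\<lambda>t. 1 / \<delta> t) (at x) b" for x
      using fd_real_deriv(1)[OF dd[of x], of b] b1 by (simp add: power2_eq_square divide_inverse)
    ultimately show ?thesis by simp
  qed
  moreover have "\<forall>x. (\<lambda>t. 1 / \<delta> t) differentiable (at x)" using fd_real_deriv(2)[OF dd] by blast
  ultimately show ?case by simp
qed



lemma line_deriv:
  fixes g :: "'a::euclidean_space \<Rightarrow> real"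
  assumes "g differentiable (at (y + t *\<^sub>R w))"
  shows "((\<lambda>t. g (y + t *\<^sub>R w)) has_real_derivative frechet_derivative g (at (y + t *\<^sub>R w)) w) (at t)"
proof -
  have G: "(g has_derivative frechet_derivative g (at (y + t *\<^sub>R w))) (at (y + t *\<^sub>R w))"
    using assms frechet_derivative_works by blast
  have L: "((\<lambda>t. y + t *\<^sub>R w) has_derivative (\<lambda>h. h *\<^sub>R w)) (at t)"
    by (auto intro!: derivative_eq_intros)
  have "((\<lambda>t. g (y + t *\<^sub>R w)) has_derivative (\<lambda>h. frechet_derivative g (at (y + t *\<^sub>R w)) (h *\<^sub>R w))) (at t)"
    using diff_chain_at[OF L G] by (simp add: o_def)
  moreover have "linear (frechet_derivative g (at (y + t *\<^sub>R w)))"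
    using assms linear_frechet_derivative by blast
  then have "(\<lambda>h. frechet_derivative g (at (y + t *\<^sub>R w)) (h *\<^sub>R w)) = (*) (frechet_derivative g (at (y + t *\<^sub>R w)) w)"
    by (intro ext) (simp add: linear_scale)
  ultimately show ?thesis by (simp add: has_field_derivative_def)
qed

lemma mixed:
  fixes f :: "'a::euclidean_space \<Rightarrow> real"
  assumes h: "0 < h"
    and box: "\<And>s t. 0 \<le> s \<Longrightarrow> s \<le> h \<Longrightarrow> 0 \<le> t \<Longrightarrow> t \<le> h \<Longrightarrow> x + s *\<^sub>R u + t *\<^sub>R v \<in> S"
    and df: "\<forall>y\<in>S. f differentiable (at y)"
    and du: "\<forall>y\<in>S. (\<lambda>z. frechet_derivative f (at z) u) differentiable (at y)"
  shows "\<exists>\<xi> \<eta>. 0 < \<xi> \<and> \<xi> < h \<and> 0 < \<eta> \<and> \<eta> < h \<and>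
     f (x + h *\<^sub>R u + h *\<^sub>R v) - f (x + h *\<^sub>R u) - f (x + h *\<^sub>R v) + f x
       = h * h * frechet_derivative (\<lambda>z. frechet_derivative f (at z) u) (at (x + \<xi> *\<^sub>R u + \<eta> *\<^sub>R v)) v"
proof -
  define fu where "fu = (\<lambda>z. frechet_derivative f (at z) u)"
  define P where "P = (\<lambda>s t. x + s *\<^sub>R u + t *\<^sub>R v)"
  have Pu: "P s t = (x + t *\<^sub>R v) + s *\<^sub>R u" for s t by (simp add: P_def algebra_simps)
  have Pv: "P s t = (x + s *\<^sub>R u) + t *\<^sub>R v" for s t by (simp add: P_def)
  define g where "g = (\<lambda>s. f (P s h) - f (P s 0))"
  have gd: "(g has_real_derivative (fu (P s h) - fu (P s 0))) (at s)" if "0 \<le> s" "s \<le> h" for s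
  proof -
    have i1: "P s h \<in> S" "P s 0 \<in> S" using box[of s h] box[of s 0] that h unfolding P_def by auto
    have a: "((\<lambda>s. f ((x + h *\<^sub>R v) + s *\<^sub>R u)) has_real_derivative fu (P s h)) (at s)"
      using line_deriv[of f "x + h *\<^sub>R v" s u] df i1 by (simp add: fu_def Pu)
    have b: "((\<lambda>s. f ((x + 0 *\<^sub>R v) + s *\<^sub>R u)) has_real_derivative fu (P s 0)) (at s)"
      using line_deriv[of f "x + 0 *\<^sub>R v" s u] df i1 by (simp add: fu_def Pu)
    have "g = (\<lambda>s. f ((x + h *\<^sub>R v) + s *\<^sub>R u) - f ((x + 0 *\<^sub>R v) + s *\<^sub>R u))"
      by (simp add: g_def Pu)
    then show ?thesis using DERIV_diff[OF a b] by simp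
  qed
  obtain \<xi> where \<xi>: "0 < \<xi>" "\<xi> < h" "g h - g 0 = (h - 0) * (fu (P \<xi> h) - fu (P \<xi> 0))"
    using MVT2[of 0 h g "\<lambda>s. fu (P s h) - fu (P s 0)"] h gd by auto
  define k where "k = (\<lambda>t. fu (P \<xi> t))"
  have kd: "(k has_real_derivative frechet_derivative fu (at (P \<xi> t)) v) (at t)" if "0 \<le> t" "t \<le> h" for t
  proof -
    have "P \<xi> t \<in> S" using box[of \<xi> t] that \<xi> unfolding P_def by auto
    then show ?thesis
      using line_deriv[of fu "x + \<xi> *\<^sub>R u" t v] du by (simp add: fu_def Pv k_def)
  qed
  obtain \<eta> where \<eta>: "0 < \<eta>" "\<eta> < h" "k h - k 0 = (h - 0) * frechet_derivative fu (at (P \<xi> \<eta>)) v"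
    using MVT2[of 0 h k "\<lambda>t. frechet_derivative fu (at (P \<xi> t)) v"] h kd by auto
  have "f (x + h *\<^sub>R u + h *\<^sub>R v) - f (x + h *\<^sub>R u) - f (x + h *\<^sub>R v) + f x = g h - g 0"
    by (simp add: g_def P_def)
  also have "\<dots> = h * (k h - k 0)" using \<xi> by (simp add: k_def)
  also have "\<dots> = h * h * frechet_derivative fu (at (P \<xi> \<eta>)) v" using \<eta> by simp
  finally show ?thesis using \<xi> \<eta> by (auto simp: P_def fu_def)
qed

lemma schwarz:
  fixes f :: "'a::euclidean_space \<Rightarrow> real"
  assumes S: "open S" "x \<in> S"
    and df: "\<forall>y\<in>S. f differentiable (at y)"
    and du: "\<forall>y\<in>S. (\<lambda>z. frechet_derivative f (at z) u) differentiable (at y)"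
    and dv: "\<forall>y\<in>S. (\<lambda>z. frechet_derivative f (at z) v) differentiable (at y)"
    and cuv: "continuous_on S (\<lambda>y. frechet_derivative (\<lambda>z. frechet_derivative f (at z) u) (at y) v)"
    and cvu: "continuous_on S (\<lambda>y. frechet_derivative (\<lambda>z. frechet_derivative f (at z) v) (at y) u)"
  shows "frechet_derivative (\<lambda>z. frechet_derivative f (at z) u) (at x) v
       = frechet_derivative (\<lambda>z. frechet_derivative f (at z) v) (at x) u"
proof (rule ccontr)
  define A where "A = (\<lambda>y. frechet_derivative (\<lambda>z. frechet_derivative f (at z) u) (at y) v)"
  define B where "B = (\<lambda>y. frechet_derivative (\<lambda>z. frechet_derivative f (at z) v) (at y) u)"
  assume "\<not> ?thesis"
  then have ne: "A x \<noteq> B x" by (simp add: A_def B_def)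
  define e where "e = \<bar>A x - B x\<bar> / 2"
  have e: "e > 0" using ne by (simp add: e_def)
  have cA: "isCont A x" using cuv S continuous_on_eq_continuous_at unfolding A_def by blast
  have cB: "isCont B x" using cvu S continuous_on_eq_continuous_at unfolding B_def by blast
  obtain d1 where d1: "d1 > 0" "\<And>y. dist y x < d1 \<Longrightarrow> dist (A y) (A x) < e"
    using cA e unfolding continuous_at_eps_delta by blast
  obtain d2 where d2: "d2 > 0" "\<And>y. dist y x < d2 \<Longrightarrow> dist (B y) (B x) < e"
    using cB e unfolding continuous_at_eps_delta by blast
  obtain r where r: "r > 0" "ball x r \<subseteq> S" using S open_contains_ball by blast
  define d where "d = min r (min d1 d2)"
  have d: "d > 0" using r d1 d2 by (simp add: d_def)
  define N where "N = norm u + norm v + 1"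
  have N: "N > 0" "norm u + norm v < N" by (auto simp: N_def intro: add_nonneg_pos)
  define h where "h = d / (2 * N)"
  have h: "h > 0" using d N by (simp add: h_def)
  have close: "dist (x + s *\<^sub>R a + t *\<^sub>R b) x < d"
    if "0 \<le> s" "s \<le> h" "0 \<le> t" "t \<le> h" "norm a + norm b < N" for s t a b
  proof -
    have "dist (x + s *\<^sub>R a + t *\<^sub>R b) x = norm (s *\<^sub>R a + t *\<^sub>R b)" by (simp add: dist_norm)
    also have "\<dots> \<le> s * norm a + t * norm b"
      using norm_triangle_ineq[of "s *\<^sub>R a" "t *\<^sub>R b"] that by simp
    also have "\<dots> \<le> h * norm a + h * norm b"
      using that by (intro add_mono mult_right_mono) auto
    also have "\<dots> \<le> h * N" using that h by (simp add: distrib_left[symmetric])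
    also have "\<dots> < d" using d N by (simp add: h_def)
    finally show ?thesis .
  qed
  have nuv: "norm u + norm v < N" "norm v + norm u < N" using N by auto
  have box1: "x + s *\<^sub>R u + t *\<^sub>R v \<in> S" if "0 \<le> s" "s \<le> h" "0 \<le> t" "t \<le> h" for s t
    using close[OF that nuv(1)] r d unfolding d_def by (auto simp: dist_commute)
  have box2: "x + s *\<^sub>R v + t *\<^sub>R u \<in> S" if "0 \<le> s" "s \<le> h" "0 \<le> t" "t \<le> h" for s t
    using close[OF that nuv(2)] r d unfolding d_def by (auto simp: dist_commute)
  obtain \<xi> \<eta> where p: "0 < \<xi>" "\<xi> < h" "0 < \<eta>" "\<eta> < h"
    "f (x + h *\<^sub>R u + h *\<^sub>R v) - f (x + h *\<^sub>R u) - f (x + h *\<^sub>R v) + f x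
       = h * h * A (x + \<xi> *\<^sub>R u + \<eta> *\<^sub>R v)"
    using mixed[OF h box1 df du] unfolding A_def by blast
  obtain \<xi>' \<eta>' where q: "0 < \<xi>'" "\<xi>' < h" "0 < \<eta>'" "\<eta>' < h"
    "f (x + h *\<^sub>R v + h *\<^sub>R u) - f (x + h *\<^sub>R v) - f (x + h *\<^sub>R u) + f x
       = h * h * B (x + \<xi>' *\<^sub>R v + \<eta>' *\<^sub>R u)"
    using mixed[OF h box2 df dv] unfolding B_def by blast
  have comm: "x + h *\<^sub>R v + h *\<^sub>R u = x + h *\<^sub>R u + h *\<^sub>R v" by (simp add: algebra_simps)
  have q5: "f (x + h *\<^sub>R u + h *\<^sub>R v) - f (x + h *\<^sub>R v) - f (x + h *\<^sub>R u) + f x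
       = h * h * B (x + \<xi>' *\<^sub>R v + \<eta>' *\<^sub>R u)" using q(5) unfolding comm .
  have "h * h * A (x + \<xi> *\<^sub>R u + \<eta> *\<^sub>R v) = h * h * B (x + \<xi>' *\<^sub>R v + \<eta>' *\<^sub>R u)"
    using p(5) q5 by linarith
  then have eq: "A (x + \<xi> *\<^sub>R u + \<eta> *\<^sub>R v) = B (x + \<xi>' *\<^sub>R v + \<eta>' *\<^sub>R u)" using h by simp
  have "dist (A (x + \<xi> *\<^sub>R u + \<eta> *\<^sub>R v)) (A x) < e"
    using d1(2) close[of \<xi> \<eta> u v] p nuv d unfolding d_def by auto
  moreover have "dist (B (x + \<xi>' *\<^sub>R v + \<eta>' *\<^sub>R u)) (B x) < e"
    using d2(2) close[of \<xi>' \<eta>' v u] q nuv d unfolding d_def by auto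
  ultimately have "\<bar>A x - B x\<bar> < 2 * e" using eq by (simp add: dist_real_def)
  then show False by (simp add: e_def)
qed

lemma reord: "(\<Sum>i<n. \<Sum>j<n. \<Sum>k<n. \<Sum>l<n. F i j k l) = (\<Sum>k<n::nat. \<Sum>l<n. \<Sum>j<n. \<Sum>i<n. F i j k l :: real)"
proof -
  have "(\<Sum>i<n. \<Sum>j<n. \<Sum>k<n. \<Sum>l<n. F i j k l) = (\<Sum>j<n. \<Sum>i<n. \<Sum>k<n. \<Sum>l<n. F i j k l)"
    by (rule sum.swap)
  also have "\<dots> = (\<Sum>j<n. \<Sum>k<n. \<Sum>i<n. \<Sum>l<n. F i j k l)"
    by (rule sum.cong[OF refl], rule sum.swap)
  also have "\<dots> = (\<Sum>j<n. \<Sum>k<n. \<Sum>l<n. \<Sum>i<n. F i j k l)"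
    by (rule sum.cong[OF refl], rule sum.cong[OF refl], rule sum.swap)
  also have "\<dots> = (\<Sum>k<n. \<Sum>j<n. \<Sum>l<n. \<Sum>i<n. F i j k l)"
    by (rule sum.swap)
  also have "\<dots> = (\<Sum>k<n. \<Sum>l<n. \<Sum>j<n. \<Sum>i<n. F i j k l)"
    by (rule sum.cong[OF refl], rule sum.swap)
  finally show ?thesis .
qed

lemma sum4_cong:
  assumes "\<And>i j k l. i < n \<Longrightarrow> j < n \<Longrightarrow> k < n \<Longrightarrow> l < n \<Longrightarrow> F i j k l = H i j k l"
  shows "(\<Sum>i<n::nat. \<Sum>j<n. \<Sum>k<n. \<Sum>l<n. F i j k l) = (\<Sum>i<n. \<Sum>j<n. \<Sum>k<n. \<Sum>l<n. H i j k l :: real)"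
  using assms by (auto intro!: sum.cong)

lemma hess_cancel:
  fixes a c :: "nat \<Rightarrow> real" and G P :: "nat \<Rightarrow> nat \<Rightarrow> real"
  assumes G: "\<And>j k. j < n \<Longrightarrow> k < n \<Longrightarrow> G j k = G k j"
    and P: "\<And>k l. k < n \<Longrightarrow> l < n \<Longrightarrow> P k l = - P l k"
  shows "(\<Sum>i<n. \<Sum>j<n. a i * P i j * (\<Sum>k<n. \<Sum>l<n. G j k * P k l * c l))
       + (\<Sum>i<n. \<Sum>j<n. c i * P i j * (\<Sum>k<n. \<Sum>l<n. a k * P k l * G j l)) = 0"
proof -
  have X: "(\<Sum>i<n. \<Sum>j<n. a i * P i j * (\<Sum>k<n. \<Sum>l<n. G j k * P k l * c l))
     = (\<Sum>i<n. \<Sum>j<n. \<Sum>k<n. \<Sum>l<n. a i * P i j * G j k * P k l * c l)"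
    by (simp add: sum_distrib_left mult.assoc)
  have "(\<Sum>i<n. \<Sum>j<n. c i * P i j * (\<Sum>k<n. \<Sum>l<n. a k * P k l * G j l))
     = (\<Sum>i<n. \<Sum>j<n. \<Sum>k<n. \<Sum>l<n. c i * P i j * (a k * P k l * G j l))"
    by (simp add: sum_distrib_left)
  also have "\<dots> = (\<Sum>i<n. \<Sum>j<n. \<Sum>k<n. \<Sum>l<n. - (a k * P k l * G l j * P j i * c i))"
  proof (rule sum4_cong)
    fix i j k l assume "i < n" "j < n" "k < n" "l < n"
    have g: "G j l = G l j" using G \<open>j < n\<close> \<open>l < n\<close> by blast
    have p: "P i j = - P j i" using P \<open>i < n\<close> \<open>j < n\<close> by blast
    show "c i * P i j * (a k * P k l * G j l) = - (a k * P k l * G l j * P j i * c i)"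
      unfolding g p by (simp add: algebra_simps)
  qed
  also have "\<dots> = (\<Sum>k<n. \<Sum>l<n. \<Sum>j<n. \<Sum>i<n. - (a k * P k l * G l j * P j i * c i))"
    by (rule reord)
  also have "\<dots> = - (\<Sum>k<n. \<Sum>l<n. \<Sum>j<n. \<Sum>i<n. a k * P k l * G l j * P j i * c i)"
    by (simp add: sum_negf)
  finally show ?thesis using X by simp
qed

lemma reord3a: "(\<Sum>i<n::nat. \<Sum>k<n. \<Sum>l<n. F i k l) = (\<Sum>l<n. \<Sum>i<n. \<Sum>k<n. F i k l :: real)"
proof -
  have "(\<Sum>i<n. \<Sum>k<n. \<Sum>l<n. F i k l) = (\<Sum>i<n. \<Sum>l<n. \<Sum>k<n. F i k l)"
    by (rule sum.cong[OF refl], rule sum.swap)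
  also have "\<dots> = (\<Sum>l<n. \<Sum>i<n. \<Sum>k<n. F i k l)" by (rule sum.swap)
  finally show ?thesis .
qed

lemma reord3b: "(\<Sum>i<n::nat. \<Sum>k<n. \<Sum>l<n. F i k l) = (\<Sum>k<n. \<Sum>l<n. \<Sum>i<n. F i k l :: real)"
proof -
  have "(\<Sum>i<n. \<Sum>k<n. \<Sum>l<n. F i k l) = (\<Sum>k<n. \<Sum>i<n. \<Sum>l<n. F i k l)" by (rule sum.swap)
  also have "\<dots> = (\<Sum>k<n. \<Sum>l<n. \<Sum>i<n. F i k l)"
    by (rule sum.cong[OF refl], rule sum.swap)
  finally show ?thesis .
qed

lemma D_reord:
  fixes a b c :: "nat \<Rightarrow> real"
  shows "(\<Sum>i<n. \<Sum>j<n. a i * P i j * (\<Sum>k<n. \<Sum>l<n. b k * dP j k l * c l))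
     = (\<Sum>i<n. \<Sum>k<n. \<Sum>l<n. a i * b k * c l * (\<Sum>j<n. P i j * dP j k l))"
proof -
  have "(\<Sum>i<n. \<Sum>j<n. a i * P i j * (\<Sum>k<n. \<Sum>l<n. b k * dP j k l * c l))
     = (\<Sum>i<n. \<Sum>j<n. \<Sum>k<n. \<Sum>l<n. a i * b k * c l * (P i j * dP j k l))"
    by (simp add: sum_distrib_left algebra_simps)
  also have "\<dots> = (\<Sum>i<n. \<Sum>k<n. \<Sum>l<n. \<Sum>j<n. a i * b k * c l * (P i j * dP j k l))"
  proof (rule sum.cong[OF refl])
    fix i
    have "(\<Sum>j<n. \<Sum>k<n. \<Sum>l<n. a i * b k * c l * (P i j * dP j k l))
        = (\<Sum>k<n. \<Sum>j<n. \<Sum>l<n. a i * b k * c l * (P i j * dP j k l))" by (rule sum.swap)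
    also have "\<dots> = (\<Sum>k<n. \<Sum>l<n. \<Sum>j<n. a i * b k * c l * (P i j * dP j k l))"
      by (rule sum.cong[OF refl], rule sum.swap)
    finally show "(\<Sum>j<n. \<Sum>k<n. \<Sum>l<n. a i * b k * c l * (P i j * dP j k l))
        = (\<Sum>k<n. \<Sum>l<n. \<Sum>j<n. a i * b k * c l * (P i j * dP j k l))" .
  qed
  also have "\<dots> = (\<Sum>i<n. \<Sum>k<n. \<Sum>l<n. a i * b k * c l * (\<Sum>j<n. P i j * dP j k l))"
    by (simp add: sum_distrib_left)
  finally show ?thesis .
qed

definition Jsum :: "nat \<Rightarrow> (nat \<Rightarrow> nat \<Rightarrow> real) \<Rightarrow> (nat \<Rightarrow> nat \<Rightarrow> nat \<Rightarrow> real) \<Rightarrow> nat \<Rightarrow> nat \<Rightarrow> nat \<Rightarrow> real" where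
  "Jsum n P dP a b c = (\<Sum>j<n. P a j * dP j b c + P b j * dP j c a + P c j * dP j a b)"

lemma split3:
  fixes a b c :: "nat \<Rightarrow> real"
  shows "(\<Sum>i<n. \<Sum>j<n. a i * P i j * (\<Sum>k<n. \<Sum>l<n. G j k * P k l * c l + b k * dP j k l * c l + b k * P k l * H j l))
    = (\<Sum>i<n. \<Sum>j<n. a i * P i j * (\<Sum>k<n. \<Sum>l<n. G j k * P k l * c l))
    + (\<Sum>i<n. \<Sum>j<n. a i * P i j * (\<Sum>k<n. \<Sum>l<n. b k * dP j k l * c l))
    + (\<Sum>i<n. \<Sum>j<n. a i * P i j * (\<Sum>k<n. \<Sum>l<n. b k * P k l * H j l))"
  by (simp add: sum.distrib distrib_left)

lemma jac_alg:
  fixes fi gi hi :: "nat \<Rightarrow> real" and F G H P :: "nat \<Rightarrow> nat \<Rightarrow> real"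
  assumes F: "\<And>j k. j < n \<Longrightarrow> k < n \<Longrightarrow> F j k = F k j"
    and G: "\<And>j k. j < n \<Longrightarrow> k < n \<Longrightarrow> G j k = G k j"
    and H: "\<And>j k. j < n \<Longrightarrow> k < n \<Longrightarrow> H j k = H k j"
    and P: "\<And>k l. k < n \<Longrightarrow> l < n \<Longrightarrow> P k l = - P l k"
  shows "(\<Sum>i<n. \<Sum>j<n. fi i * P i j * (\<Sum>k<n. \<Sum>l<n. G j k * P k l * hi l + gi k * dP j k l * hi l + gi k * P k l * H j l))
       + (\<Sum>i<n. \<Sum>j<n. gi i * P i j * (\<Sum>k<n. \<Sum>l<n. H j k * P k l * fi l + hi k * dP j k l * fi l + hi k * P k l * F j l))
       + (\<Sum>i<n. \<Sum>j<n. hi i * P i j * (\<Sum>k<n. \<Sum>l<n. F j k * P k l * gi l + fi k * dP j k l * gi l + fi k * P k l * G j l))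
     = (\<Sum>a<n. \<Sum>b<n. \<Sum>c<n. fi a * gi b * hi c * Jsum n P dP a b c)"
proof -
  note c1 = hess_cancel[of n G P fi hi, OF G P]
  note c2 = hess_cancel[of n H P gi fi, OF H P]
  note c3 = hess_cancel[of n F P hi gi, OF F P]
  have d1: "(\<Sum>i<n. \<Sum>j<n. fi i * P i j * (\<Sum>k<n. \<Sum>l<n. gi k * dP j k l * hi l))
      = (\<Sum>a<n. \<Sum>b<n. \<Sum>c<n. fi a * gi b * hi c * (\<Sum>j<n. P a j * dP j b c))"
    by (rule D_reord)
  have d2: "(\<Sum>i<n. \<Sum>j<n. gi i * P i j * (\<Sum>k<n. \<Sum>l<n. hi k * dP j k l * fi l))
      = (\<Sum>a<n. \<Sum>b<n. \<Sum>c<n. fi a * gi b * hi c * (\<Sum>j<n. P b j * dP j c a))"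
    by (rule trans[OF D_reord trans[OF reord3a]]) (simp add: mult.commute mult.left_commute)
  have d3: "(\<Sum>i<n. \<Sum>j<n. hi i * P i j * (\<Sum>k<n. \<Sum>l<n. fi k * dP j k l * gi l))
      = (\<Sum>a<n. \<Sum>b<n. \<Sum>c<n. fi a * gi b * hi c * (\<Sum>j<n. P c j * dP j a b))"
    by (rule trans[OF D_reord trans[OF reord3b]]) (simp add: mult.commute mult.left_commute)
  have "(\<Sum>a<n. \<Sum>b<n. \<Sum>c<n. fi a * gi b * hi c * Jsum n P dP a b c)
     = (\<Sum>a<n. \<Sum>b<n. \<Sum>c<n. fi a * gi b * hi c * (\<Sum>j<n. P a j * dP j b c))
     + (\<Sum>a<n. \<Sum>b<n. \<Sum>c<n. fi a * gi b * hi c * (\<Sum>j<n. P b j * dP j c a))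
     + (\<Sum>a<n. \<Sum>b<n. \<Sum>c<n. fi a * gi b * hi c * (\<Sum>j<n. P c j * dP j a b))"
    by (simp add: Jsum_def sum.distrib distrib_left)
  then show ?thesis
    unfolding split3 using c1 c2 c3 d1 d2 d3 by linarith
qed


lemma bracket_deriv:
  assumes dg: "\<forall>k<6. (pd k g) differentiable (at x)"
    and dh: "\<forall>k<6. (pd k h) differentiable (at x)"
    and dP: "\<forall>k<6. \<forall>l<6. (\<lambda>y. Pi_mu mu y ! k ! l) differentiable (at x)"
  shows "pd j (pbracket mu g h) x = (\<Sum>k<6. \<Sum>l<6.
      pd j (pd k g) x * (Pi_mu mu x ! k ! l) * pd l h x
    + pd k g x * pd j (\<lambda>y. Pi_mu mu y ! k ! l) x * pd l h x
    + pd k g x * (Pi_mu mu x ! k ! l) * pd j (pd l h) x)"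
proof -
  have eq: "pbracket mu g h = (\<lambda>y. \<Sum>k<6. \<Sum>l<6. pd k g y * (Pi_mu mu y ! k ! l) * pd l h y)"
    by (intro ext) (simp add: pbracket_def)
  have "((\<lambda>y. \<Sum>k<6. \<Sum>l<6. pd k g y * (Pi_mu mu y ! k ! l) * pd l h y) has_derivative
     (\<lambda>v. \<Sum>k<6. \<Sum>l<6. pd k g x * (Pi_mu mu x ! k ! l) * frechet_derivative (pd l h) (at x) v
        + (pd k g x * frechet_derivative (\<lambda>y. Pi_mu mu y ! k ! l) (at x) v
           + frechet_derivative (pd k g) (at x) v * (Pi_mu mu x ! k ! l)) * pd l h x)) (at x)"
  proof (intro has_derivative_sum)
    fix k l assume k: "k \<in> {..<6::nat}" and l: "l \<in> {..<6::nat}"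
    have a: "(pd k g has_derivative frechet_derivative (pd k g) (at x)) (at x)"
      using dg k by (simp add: frechet_derivative_works[symmetric])
    have b: "((\<lambda>y. Pi_mu mu y ! k ! l) has_derivative frechet_derivative (\<lambda>y. Pi_mu mu y ! k ! l) (at x)) (at x)"
      using dP k l by (simp add: frechet_derivative_works[symmetric])
    have c: "(pd l h has_derivative frechet_derivative (pd l h) (at x)) (at x)"
      using dh l by (simp add: frechet_derivative_works[symmetric])
    show "((\<lambda>y. pd k g y * (Pi_mu mu y ! k ! l) * pd l h y) has_derivative
     (\<lambda>v. pd k g x * (Pi_mu mu x ! k ! l) * frechet_derivative (pd l h) (at x) v
        + (pd k g x * frechet_derivative (\<lambda>y. Pi_mu mu y ! k ! l) (at x) v
           + frechet_derivative (pd k g) (at x) v * (Pi_mu mu x ! k ! l)) * pd l h x)) (at x)"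
      by (rule has_derivative_mult[OF has_derivative_mult[OF a b] c])
  qed
  then have "frechet_derivative (pbracket mu g h) (at x) = (\<lambda>v. \<Sum>k<6. \<Sum>l<6. pd k g x * (Pi_mu mu x ! k ! l) * frechet_derivative (pd l h) (at x) v
        + (pd k g x * frechet_derivative (\<lambda>y. Pi_mu mu y ! k ! l) (at x) v
           + frechet_derivative (pd k g) (at x) v * (Pi_mu mu x ! k ! l)) * pd l h x)"
    unfolding eq by (rule fd_eq)
  then show ?thesis
    by (simp add: pd_def[of j] algebra_simps)
qed

lemma less6: "(k::nat) < 6 \<longleftrightarrow> k = 0 \<or> k = 1 \<or> k = 2 \<or> k = 3 \<or> k = 4 \<or> k = 5" by auto

lemma Pi_skew: "k < 6 \<Longrightarrow> l < 6 \<Longrightarrow> Pi_mu mu x ! k ! l = - (Pi_mu mu x ! l ! k)"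
  unfolding less6 by (auto simp: Pi_mu_def Let_def)

lemma jac_point:
  assumes df: "\<forall>k<6. (pd k f) differentiable (at x)"
    and dg: "\<forall>k<6. (pd k g) differentiable (at x)"
    and dh: "\<forall>k<6. (pd k h) differentiable (at x)"
    and sf: "\<And>j k. j < 6 \<Longrightarrow> k < 6 \<Longrightarrow> pd j (pd k f) x = pd k (pd j f) x"
    and sg: "\<And>j k. j < 6 \<Longrightarrow> k < 6 \<Longrightarrow> pd j (pd k g) x = pd k (pd j g) x"
    and sh: "\<And>j k. j < 6 \<Longrightarrow> k < 6 \<Longrightarrow> pd j (pd k h) x = pd k (pd j h) x"
    and dP: "\<forall>k<6. \<forall>l<6. (\<lambda>y. Pi_mu mu y ! k ! l) differentiable (at x)"
  shows "pbracket mu f (pbracket mu g h) x + pbracket mu g (pbracket mu h f) x + pbracket mu h (pbracket mu f g) x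
    = (\<Sum>a<6. \<Sum>b<6. \<Sum>c<6. pd a f x * pd b g x * pd c h x *
         Jsum 6 (\<lambda>k l. Pi_mu mu x ! k ! l) (\<lambda>j k l. pd j (\<lambda>y. Pi_mu mu y ! k ! l) x) a b c)"
proof -
  have e1: "pbracket mu f (pbracket mu g h) x = (\<Sum>i<6. \<Sum>j<6. pd i f x * (Pi_mu mu x ! i ! j) * (\<Sum>k<6. \<Sum>l<6.
      pd j (pd k g) x * (Pi_mu mu x ! k ! l) * pd l h x
    + pd k g x * pd j (\<lambda>y. Pi_mu mu y ! k ! l) x * pd l h x
    + pd k g x * (Pi_mu mu x ! k ! l) * pd j (pd l h) x))"
    unfolding pbracket_def[of mu f] bracket_deriv[OF dg dh dP] ..
  have e2: "pbracket mu g (pbracket mu h f) x = (\<Sum>i<6. \<Sum>j<6. pd i g x * (Pi_mu mu x ! i ! j) * (\<Sum>k<6. \<Sum>l<6.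
      pd j (pd k h) x * (Pi_mu mu x ! k ! l) * pd l f x
    + pd k h x * pd j (\<lambda>y. Pi_mu mu y ! k ! l) x * pd l f x
    + pd k h x * (Pi_mu mu x ! k ! l) * pd j (pd l f) x))"
    unfolding pbracket_def[of mu g] bracket_deriv[OF dh df dP] ..
  have e3: "pbracket mu h (pbracket mu f g) x = (\<Sum>i<6. \<Sum>j<6. pd i h x * (Pi_mu mu x ! i ! j) * (\<Sum>k<6. \<Sum>l<6.
      pd j (pd k f) x * (Pi_mu mu x ! k ! l) * pd l g x
    + pd k f x * pd j (\<lambda>y. Pi_mu mu y ! k ! l) x * pd l g x
    + pd k f x * (Pi_mu mu x ! k ! l) * pd j (pd l g) x))"
    unfolding pbracket_def[of mu h] bracket_deriv[OF df dg dP] ..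
  show ?thesis unfolding e1 e2 e3
    by (rule jac_alg[where F="\<lambda>j k. pd j (pd k f) x" and G="\<lambda>j k. pd j (pd k g) x" and H="\<lambda>j k. pd j (pd k h) x"
          and P="\<lambda>k l. Pi_mu mu x ! k ! l" and fi="\<lambda>i. pd i f x" and gi="\<lambda>i. pd i g x" and hi="\<lambda>i. pd i h x"
          and dP="\<lambda>j k l. pd j (\<lambda>y. Pi_mu mu y ! k ! l) x", OF sf sg sh Pi_skew])
qed


definition PL :: "real^3 \<Rightarrow> real^3 \<Rightarrow> real \<Rightarrow> real list list" where
  "PL M g a = [[0, -(M$3) - a, M$2, 0, -(g$3), g$2],
      [M$3 + a, 0, -(M$1), g$3, 0, -(g$1)],
      [-(M$2), M$1, 0, -(g$2), g$1, 0],
      [0, -(g$3), g$2, 0, 0, 0],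
      [g$3, 0, -(g$1), 0, 0, 0],
      [-(g$2), g$1, 0, 0, 0, 0]]"

lemma lt6_set: "{..<6::nat} = {0,1,2,3,4,5}" by auto

lemma e6_simps: "e6 0 = (vector [1,0,0], 0)" "e6 1 = (vector [0,1,0], 0)" "e6 2 = (vector [0,0,1], 0)"
  "e6 3 = (0, vector [1,0,0])" "e6 4 = (0, vector [0,1,0])" "e6 5 = (0, vector [0,0,1])"
  by (simp_all add: e6_def)

lemma e6_Suc0: "e6 (Suc 0) = (vector [0,1,0], 0)" by (simp add: e6_def)

definition DAc :: "real^3 \<Rightarrow> real^3 \<Rightarrow> real \<Rightarrow> real \<Rightarrow> real \<Rightarrow> real \<Rightarrow> nat \<Rightarrow> real" where
  "DAc M g p1 p2 p3 q j = [g$1*q, g$2*q, g$3*q, p1 + M$1*q, p2 + M$2*q, p3 + M$3*q] ! j"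

lemma J012: "Jsum 6 (\<lambda>k l. PL M g a0 ! k ! l) (\<lambda>j k l. PL (fst (e6 j)) (snd (e6 j)) (DAc M g p1 p2 p3 q j) ! k ! l) 0 1 2
   = g$2 * p1 - g$1 * p2"
  by (simp add: Jsum_def lt6_set PL_def e6_simps e6_Suc0 DAc_def algebra_simps)

definition LC :: "nat \<Rightarrow> nat \<Rightarrow> nat \<Rightarrow> real" where
  "LC a b c = (if (a,b,c) \<in> {(0,1,2),(1,2,0),(2,0,1)} then 1 else if (a,b,c) \<in> {(0,2,1),(2,1,0),(1,0,2)} then -1 else 0)"

lemma J_all:
  assumes "a < 6" "b < 6" "c < 6"
  shows "Jsum 6 (\<lambda>k l. PL M g a0 ! k ! l) (\<lambda>j k l. PL (fst (e6 j)) (snd (e6 j)) (DAc M g p1 p2 p3 q j) ! k ! l) a b c = LC a b c * (g$2 * p1 - g$1 * p2)"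
  using assms unfolding less6
  by (elim disjE; simp add: Jsum_def lt6_set PL_def e6_simps e6_Suc0 DAc_def LC_def algebra_simps)


lemma Pi_eq: "Pi_mu (\<lambda>(M, g). vector [0, 0, mu3 (g, M \<bullet> g)]) y = PL (fst y) (snd y) (mu3 (snd y, fst y \<bullet> snd y))"
  by (cases y) (simp add: Pi_mu_def PL_def Let_def)

lemma hd_fst: "((\<lambda>y. fst y $ i) has_derivative (\<lambda>v. fst v $ i)) F"
  by (intro bounded_linear_imp_has_derivative bounded_linear_compose[OF bounded_linear_vec_nth bounded_linear_fst])

lemma hd_snd: "((\<lambda>y. snd y $ i) has_derivative (\<lambda>v. snd v $ i)) F"
  by (intro bounded_linear_imp_has_derivative bounded_linear_compose[OF bounded_linear_vec_nth bounded_linear_snd])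

lemma PL_deriv:
  assumes A: "(A has_derivative A') (at x)" and "k < 6" "l < 6"
  shows "((\<lambda>y. PL (fst y) (snd y) (A y) ! k ! l) has_derivative (\<lambda>v. PL (fst v) (snd v) (A' v) ! k ! l)) (at x)"
  using assms(2,3) unfolding less6
  by (elim disjE; simp add: PL_def; intro derivative_intros hd_fst hd_snd A)

lemma A_deriv:
  assumes "mu3 differentiable (at (snd x, fst x \<bullet> snd x))"
  shows "((\<lambda>y. mu3 (snd y, fst y \<bullet> snd y)) has_derivative
     (\<lambda>v. frechet_derivative mu3 (at (snd x, fst x \<bullet> snd x)) (snd v, fst x \<bullet> snd v + fst v \<bullet> snd x))) (at x)"
proof -
  have i: "((\<lambda>y. (snd y, fst y \<bullet> snd y)) has_derivative (\<lambda>v. (snd v, fst x \<bullet> snd v + fst v \<bullet> snd x))) (at x)"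
    by (intro derivative_intros)
  have m: "(mu3 has_derivative frechet_derivative mu3 (at (snd x, fst x \<bullet> snd x))) (at (snd x, fst x \<bullet> snd x))"
    using assms frechet_derivative_works by blast
  show ?thesis using diff_chain_at[OF i m] by (simp add: o_def)
qed

lemma lin_split:
  assumes "linear (L :: (real^3) \<times> real \<Rightarrow> real)"
  shows "L (u, t) = L (u, 0) + t * L (0, 1)"
proof -
  have e: "(u, t) = (u, 0) + t *\<^sub>R (0, 1)" by simp
  have "L ((u, 0) + t *\<^sub>R (0, 1)) = L (u, 0) + L (t *\<^sub>R (0, 1))" by (rule linear_add[OF assms])
  also have "\<dots> = L (u, 0) + t *\<^sub>R L (0, 1)" by (simp only: linear_scale[OF assms])
  finally show ?thesis unfolding e by simp
qed

lemma inner_e: "vector [1,0,0] \<bullet> (g::real^3) = g$1" "vector [0,1,0] \<bullet> g = g$2" "vector [0,0,1] \<bullet> g = g$3"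
  "g \<bullet> vector [1,0,0] = g$1" "g \<bullet> vector [0,1,0] = g$2" "g \<bullet> vector [0,0,1] = g$3"
  by (simp_all add: inner_vec_def sum_3)

lemma DA_eq:
  assumes L: "linear (L :: (real^3) \<times> real \<Rightarrow> real)" and j: "j < 6"
  shows "L (snd (e6 j), M \<bullet> snd (e6 j) + fst (e6 j) \<bullet> g)
    = DAc M g (L (vector [1,0,0], 0)) (L (vector [0,1,0], 0)) (L (vector [0,0,1], 0)) (L (0, 1)) j"
proof -
  have h0: "L (0, t) = t * L (0, 1)" for t
  proof -
    have e: "(0::real^3, t) = t *\<^sub>R (0, 1)" by simp
    show ?thesis unfolding e linear_scale[OF L] by simp
  qed
  note h1 = lin_split[OF L]
  show ?thesis using j unfolding less6
    apply (elim disjE)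
    apply (simp_all add: e6_simps e6_Suc0 DAc_def inner_e h0[of "g$1"] h0[of "g$2"] h0[of "g$3"])
    apply (simp_all add: h1[of "vector [1,0,0]" "M$1"] h1[of "vector [0,1,0]" "M$2"] h1[of "vector [0,0,1]" "M$3"] mult.commute)
    done
qed



lemma vec_axis: "vector [1,0,0] = (axis 1 1 :: real^3)" "vector [0,1,0] = (axis 2 1 :: real^3)"
  "vector [0,0,1] = (axis 3 1 :: real^3)"
  by (simp_all add: vec_eq_iff forall_3 axis_def)

lemma e6_Basis: "k < 6 \<Longrightarrow> e6 k \<in> Basis"
  unfolding less6 by (auto simp: e6_simps e6_Suc0 vec_axis Basis_prod_def)

lemma e6_inner: "k < 6 \<Longrightarrow> a < 6 \<Longrightarrow> e6 k \<bullet> e6 a = (if k = a then 1 else 0)"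
  unfolding less6 by (auto simp: e6_simps e6_Suc0 inner_e)

lemma pd_eta: "pd k f = (\<lambda>z. frechet_derivative f (at z) (e6 k))"
  by (rule ext) (simp add: pd_def)

lemma P_pd:
  assumes d: "mu3 differentiable (at (snd x, fst x \<bullet> snd x))" and "k < 6" "l < 6"
  shows "(\<lambda>y. Pi_mu (\<lambda>(M, g). vector [0, 0, mu3 (g, M \<bullet> g)]) y ! k ! l) differentiable (at x)"
    "pd j (\<lambda>y. Pi_mu (\<lambda>(M, g). vector [0, 0, mu3 (g, M \<bullet> g)]) y ! k ! l) x
      = PL (fst (e6 j)) (snd (e6 j)) (frechet_derivative mu3 (at (snd x, fst x \<bullet> snd x))
           (snd (e6 j), fst x \<bullet> snd (e6 j) + fst (e6 j) \<bullet> snd x)) ! k ! l"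
proof -
  have eq: "(\<lambda>y. Pi_mu (\<lambda>(M, g). vector [0, 0, mu3 (g, M \<bullet> g)]) y ! k ! l)
     = (\<lambda>y. PL (fst y) (snd y) (mu3 (snd y, fst y \<bullet> snd y)) ! k ! l)"
    by (rule ext) (simp add: Pi_eq)
  note h = PL_deriv[OF A_deriv[OF d] assms(2,3)]
  show "(\<lambda>y. Pi_mu (\<lambda>(M, g). vector [0, 0, mu3 (g, M \<bullet> g)]) y ! k ! l) differentiable (at x)"
    unfolding eq using h by (auto simp: differentiable_def)
  show "pd j (\<lambda>y. Pi_mu (\<lambda>(M, g). vector [0, 0, mu3 (g, M \<bullet> g)]) y ! k ! l) x
      = PL (fst (e6 j)) (snd (e6 j)) (frechet_derivative mu3 (at (snd x, fst x \<bullet> snd x))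
           (snd (e6 j), fst x \<bullet> snd (e6 j) + fst (e6 j) \<bullet> snd x)) ! k ! l"
    unfolding eq pd_def fd_eq[OF h] by simp
qed

lemma J_at:
  assumes d: "mu3 differentiable (at (snd x, fst x \<bullet> snd x))" and abc: "a < 6" "b < 6" "c < 6"
  shows "Jsum 6 (\<lambda>k l. Pi_mu (\<lambda>(M, g). vector [0, 0, mu3 (g, M \<bullet> g)]) x ! k ! l)
     (\<lambda>j k l. pd j (\<lambda>y. Pi_mu (\<lambda>(M, g). vector [0, 0, mu3 (g, M \<bullet> g)]) y ! k ! l) x) a b c
   = LC a b c * ((snd x)$2 * frechet_derivative mu3 (at (snd x, fst x \<bullet> snd x)) (vector [1,0,0], 0)
        - (snd x)$1 * frechet_derivative mu3 (at (snd x, fst x \<bullet> snd x)) (vector [0,1,0], 0))"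
proof -
  let ?L = "frechet_derivative mu3 (at (snd x, fst x \<bullet> snd x))"
  have lin: "linear ?L" using d linear_frechet_derivative by blast
  have "Jsum 6 (\<lambda>k l. Pi_mu (\<lambda>(M, g). vector [0, 0, mu3 (g, M \<bullet> g)]) x ! k ! l)
     (\<lambda>j k l. pd j (\<lambda>y. Pi_mu (\<lambda>(M, g). vector [0, 0, mu3 (g, M \<bullet> g)]) y ! k ! l) x) a b c
   = Jsum 6 (\<lambda>k l. PL (fst x) (snd x) (mu3 (snd x, fst x \<bullet> snd x)) ! k ! l)
      (\<lambda>j k l. PL (fst (e6 j)) (snd (e6 j)) (DAc (fst x) (snd x) (?L (vector [1,0,0], 0)) (?L (vector [0,1,0], 0))
          (?L (vector [0,0,1], 0)) (?L (0, 1)) j) ! k ! l) a b c"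
    unfolding Jsum_def
  proof (rule sum.cong[OF refl])
    fix j assume j: "j \<in> {..<6::nat}"
    then have j6: "j < 6" by simp
    show "Pi_mu (\<lambda>(M, g). vector [0, 0, mu3 (g, M \<bullet> g)]) x ! a ! j *
          pd j (\<lambda>y. Pi_mu (\<lambda>(M, g). vector [0, 0, mu3 (g, M \<bullet> g)]) y ! b ! c) x +
          Pi_mu (\<lambda>(M, g). vector [0, 0, mu3 (g, M \<bullet> g)]) x ! b ! j *
          pd j (\<lambda>y. Pi_mu (\<lambda>(M, g). vector [0, 0, mu3 (g, M \<bullet> g)]) y ! c ! a) x +
          Pi_mu (\<lambda>(M, g). vector [0, 0, mu3 (g, M \<bullet> g)]) x ! c ! j *
          pd j (\<lambda>y. Pi_mu (\<lambda>(M, g). vector [0, 0, mu3 (g, M \<bullet> g)]) y ! a ! b) x =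
          PL (fst x) (snd x) (mu3 (snd x, fst x \<bullet> snd x)) ! a ! j *
          PL (fst (e6 j)) (snd (e6 j)) (DAc (fst x) (snd x) (?L (vector [1,0,0], 0)) (?L (vector [0,1,0], 0))
            (?L (vector [0,0,1], 0)) (?L (0, 1)) j) ! b ! c +
          PL (fst x) (snd x) (mu3 (snd x, fst x \<bullet> snd x)) ! b ! j *
          PL (fst (e6 j)) (snd (e6 j)) (DAc (fst x) (snd x) (?L (vector [1,0,0], 0)) (?L (vector [0,1,0], 0))
            (?L (vector [0,0,1], 0)) (?L (0, 1)) j) ! c ! a +
          PL (fst x) (snd x) (mu3 (snd x, fst x \<bullet> snd x)) ! c ! j *
          PL (fst (e6 j)) (snd (e6 j)) (DAc (fst x) (snd x) (?L (vector [1,0,0], 0)) (?L (vector [0,1,0], 0))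
            (?L (vector [0,0,1], 0)) (?L (0, 1)) j) ! a ! b"
      using j abc
      unfolding P_pd(2)[OF d abc(2,3)] P_pd(2)[OF d abc(3,1)] P_pd(2)[OF d abc(1,2)]
      unfolding Pi_eq DA_eq[OF lin, where j=j and M="fst x" and g="snd x", OF j6] by simp
  qed
  also have "\<dots> = LC a b c * ((snd x)$2 * ?L (vector [1,0,0], 0) - (snd x)$1 * ?L (vector [0,1,0], 0))"
    by (rule J_all[OF abc])
  finally show ?thesis .
qed



lemma smooth_pd:
  assumes S: "open S" and sm: "smooth_on S f" and x: "x \<in> S" and k: "k < 6" and j: "j < 6"
  shows "(pd k f) differentiable (at x)" "pd j (pd k f) x = pd k (pd j f) x"
proof -
  have C2: "Ck_on 2 S f" using sm by (simp add: smooth_on_def)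
  then have df: "\<forall>y\<in>S. f differentiable (at y)"
    and C1: "\<forall>b\<in>Basis. Ck_on 1 S (\<lambda>x. frechet_derivative f (at x) b)"
    by (simp_all add: numeral_2_eq_2)
  have dd: "\<forall>y\<in>S. (\<lambda>z. frechet_derivative f (at z) b) differentiable (at y)"
    and cc: "\<forall>b'\<in>Basis. continuous_on S (\<lambda>y. frechet_derivative (\<lambda>z. frechet_derivative f (at z) b) (at y) b')"
    if "b \<in> Basis" for b
    using C1 that by auto
  have ek: "e6 k \<in> Basis" and ej: "e6 j \<in> Basis" using e6_Basis k j by auto
  show "(pd k f) differentiable (at x)" unfolding pd_eta using dd[OF ek] x by blast
  show "pd j (pd k f) x = pd k (pd j f) x"
    unfolding pd_eta
    using schwarz[OF S x df dd[OF ek] dd[OF ej] cc[OF ek, rule_format, OF ej] cc[OF ej, rule_format, OF ek]]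
    by simp
qed

lemma mu3_diff:
  assumes "smooth_on (D \<times> UNIV) mu3" "g \<in> D"
  shows "mu3 differentiable (at (g, s))"
proof -
  have "Ck_on 1 (D \<times> UNIV) mu3" using assms(1) by (simp add: smooth_on_def)
  then show ?thesis using assms(2) by simp
qed

lemma poisson_if:
  fixes D :: "(real^3) set" and mu3 :: "(real^3) \<times> real \<Rightarrow> real"
  assumes D: "open D" and md: "\<And>g s. g \<in> D \<Longrightarrow> mu3 differentiable (at (g, s))"
    and cond: "\<forall>g\<in>D. \<forall>s. g$1 * frechet_derivative mu3 (at (g, s)) (vector [0,1,0], 0)
                      - g$2 * frechet_derivative mu3 (at (g, s)) (vector [1,0,0], 0) = 0"
  shows "defines_poisson (\<lambda>(M, g). vector [0, 0, mu3 (g, M \<bullet> g)]) (UNIV \<times> D)"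
  unfolding defines_poisson_def
proof (intro allI impI ballI)
  fix f g h :: "(real^3) \<times> (real^3) \<Rightarrow> real" and x :: "(real^3) \<times> (real^3)"
  assume sm: "smooth_on (UNIV \<times> D) f \<and> smooth_on (UNIV \<times> D) g \<and> smooth_on (UNIV \<times> D) h"
    and x: "x \<in> UNIV \<times> D"
  have O: "open (UNIV \<times> D)" using D by (simp add: open_Times)
  have xD: "snd x \<in> D" using x by auto
  have d: "mu3 differentiable (at (snd x, fst x \<bullet> snd x))" using md xD by blast
  have dP: "\<forall>k<6. \<forall>l<6. (\<lambda>y. Pi_mu (\<lambda>(M, g). vector [0, 0, mu3 (g, M \<bullet> g)]) y ! k ! l) differentiable (at x)"
    using P_pd(1)[OF d] by blast
  have smf: "smooth_on (UNIV \<times> D) f" and smg: "smooth_on (UNIV \<times> D) g" and smh: "smooth_on (UNIV \<times> D) h"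
    using sm by auto
  have sf: "\<forall>k<6. (pd k f) differentiable (at x)" "\<And>j k. j < 6 \<Longrightarrow> k < 6 \<Longrightarrow> pd j (pd k f) x = pd k (pd j f) x"
    using smooth_pd[OF O smf x] by auto
  have sg: "\<forall>k<6. (pd k g) differentiable (at x)" "\<And>j k. j < 6 \<Longrightarrow> k < 6 \<Longrightarrow> pd j (pd k g) x = pd k (pd j g) x"
    using smooth_pd[OF O smg x] by auto
  have sh: "\<forall>k<6. (pd k h) differentiable (at x)" "\<And>j k. j < 6 \<Longrightarrow> k < 6 \<Longrightarrow> pd j (pd k h) x = pd k (pd j h) x"
    using smooth_pd[OF O smh x] by auto
  have c0: "snd x $ 2 * frechet_derivative mu3 (at (snd x, fst x \<bullet> snd x)) (vector [1,0,0], 0)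
        - snd x $ 1 * frechet_derivative mu3 (at (snd x, fst x \<bullet> snd x)) (vector [0,1,0], 0) = 0"
    using cond xD by (metis (no_types, lifting) diff_eq_eq mult.commute add.inverse_neutral minus_diff_eq)
  show "pbracket (\<lambda>(M, g). vector [0, 0, mu3 (g, M \<bullet> g)]) f (pbracket (\<lambda>(M, g). vector [0, 0, mu3 (g, M \<bullet> g)]) g h) x +
         pbracket (\<lambda>(M, g). vector [0, 0, mu3 (g, M \<bullet> g)]) g (pbracket (\<lambda>(M, g). vector [0, 0, mu3 (g, M \<bullet> g)]) h f) x +
         pbracket (\<lambda>(M, g). vector [0, 0, mu3 (g, M \<bullet> g)]) h (pbracket (\<lambda>(M, g). vector [0, 0, mu3 (g, M \<bullet> g)]) f g) x = 0"
    unfolding jac_point[OF sf(1) sg(1) sh(1) sf(2) sg(2) sh(2) dP, simplified]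
    by (intro sum.neutral ballI) (simp add: J_at[OF d] c0)
qed


lemma pd_inner: "pd k (\<lambda>y. y \<bullet> w) = (\<lambda>y. e6 k \<bullet> w)"
proof (rule ext)
  fix y
  have "((\<lambda>y. y \<bullet> w) has_derivative (\<lambda>h. h \<bullet> w)) (at y)" by (auto intro!: derivative_eq_intros)
  then show "pd k (\<lambda>y. y \<bullet> w) y = e6 k \<bullet> w" by (simp add: pd_def fd_eq)
qed

lemma pd_const: "pd k (\<lambda>y. c) = (\<lambda>y. 0)"
  by (rule ext) (simp add: pd_def fd_eq)

lemma poisson_only_if:
  fixes D :: "(real^3) set" and mu3 :: "(real^3) \<times> real \<Rightarrow> real"
  assumes D: "open D" and nz: "0 \<notin> D" and md: "\<And>g s. g \<in> D \<Longrightarrow> mu3 differentiable (at (g, s))"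
    and P: "defines_poisson (\<lambda>(M, g). vector [0, 0, mu3 (g, M \<bullet> g)]) (UNIV \<times> D)"
  shows "\<forall>g\<in>D. \<forall>s. g$1 * frechet_derivative mu3 (at (g, s)) (vector [0,1,0], 0)
                      - g$2 * frechet_derivative mu3 (at (g, s)) (vector [1,0,0], 0) = 0"
proof (intro ballI allI)
  fix g :: "real^3" and s :: real
  assume gD: "g \<in> D"
  have g0: "g \<bullet> g \<noteq> 0" using gD nz by auto
  define M where "M = (s / (g \<bullet> g)) *\<^sub>R g"
  have Mg: "M \<bullet> g = s" using g0 by (simp add: M_def)
  define x where "x = (M, g)"
  have x: "x \<in> UNIV \<times> D" using gD by (simp add: x_def)
  have d: "mu3 differentiable (at (snd x, fst x \<bullet> snd x))" using md gD by (simp add: x_def)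
  define xf where "xf = (\<lambda>a (y::(real^3) \<times> (real^3)). y \<bullet> e6 a)"
  have sm: "smooth_on (UNIV \<times> D) (xf a)" for a
    by (simp add: smooth_on_def xf_def Ck_inner)
  have pdx: "pd k (xf a) = (\<lambda>y. e6 k \<bullet> e6 a)" for k a by (simp add: xf_def pd_inner)
  have dx: "\<forall>k<6. (pd k (xf a)) differentiable (at x)" for a by (simp add: pdx)
  have hx: "pd j (pd k (xf a)) x = pd k (pd j (xf a)) x" for j k a by (simp add: pdx pd_const)
  have dP: "\<forall>k<6. \<forall>l<6. (\<lambda>y. Pi_mu (\<lambda>(M, g). vector [0, 0, mu3 (g, M \<bullet> g)]) y ! k ! l) differentiable (at x)"
    using P_pd(1)[OF d] by blast
  have "0 = pbracket (\<lambda>(M, g). vector [0, 0, mu3 (g, M \<bullet> g)]) (xf 0) (pbracket (\<lambda>(M, g). vector [0, 0, mu3 (g, M \<bullet> g)]) (xf 1) (xf 2)) x +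
         pbracket (\<lambda>(M, g). vector [0, 0, mu3 (g, M \<bullet> g)]) (xf 1) (pbracket (\<lambda>(M, g). vector [0, 0, mu3 (g, M \<bullet> g)]) (xf 2) (xf 0)) x +
         pbracket (\<lambda>(M, g). vector [0, 0, mu3 (g, M \<bullet> g)]) (xf 2) (pbracket (\<lambda>(M, g). vector [0, 0, mu3 (g, M \<bullet> g)]) (xf 0) (xf 1)) x"
    using P[unfolded defines_poisson_def, rule_format, of "xf 0" "xf 1" "xf 2" x] sm x by simp
  also have "\<dots> = (\<Sum>a<6. \<Sum>b<6. \<Sum>c<6. (e6 a \<bullet> e6 0) * (e6 b \<bullet> e6 1) * (e6 c \<bullet> e6 2) *
       (LC a b c * ((snd x)$2 * frechet_derivative mu3 (at (snd x, fst x \<bullet> snd x)) (vector [1,0,0], 0)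
        - (snd x)$1 * frechet_derivative mu3 (at (snd x, fst x \<bullet> snd x)) (vector [0,1,0], 0))))"
    unfolding jac_point[OF dx dx dx hx hx hx dP]
    by (intro sum.cong refl) (simp add: J_at[OF d] pdx)
  also have "\<dots> = (snd x)$2 * frechet_derivative mu3 (at (snd x, fst x \<bullet> snd x)) (vector [1,0,0], 0)
        - (snd x)$1 * frechet_derivative mu3 (at (snd x, fst x \<bullet> snd x)) (vector [0,1,0], 0)"
    by (simp add: lt6_set e6_simps e6_Suc0 inner_e LC_def)
  finally show "g$1 * frechet_derivative mu3 (at (g, s)) (vector [0,1,0], 0)
                      - g$2 * frechet_derivative mu3 (at (g, s)) (vector [1,0,0], 0) = 0"
    by (simp add: x_def Mg)
qed



lemma smooth_diff: "smooth_on S f \<Longrightarrow> x \<in> S \<Longrightarrow> f differentiable (at x)"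
  by (metis Ck_on.simps(2) One_nat_def smooth_on_def)

lemma prod_cond:
  fixes D :: "(real^3) set" and mu3 :: "(real^3) \<times> real \<Rightarrow> real" and \<beta> \<delta> :: "real \<Rightarrow> real"
  assumes D: "open D" and sb: "smooth_on UNIV \<beta>" and sd: "smooth_on UNIV \<delta>"
    and eq: "\<forall>g\<in>D. \<forall>s. mu3 (g, s) = \<beta> (g$3) * \<delta> s" and gD: "g \<in> D"
  shows "frechet_derivative mu3 (at (g, s)) (vector [0,1,0], 0) = 0"
    "frechet_derivative mu3 (at (g, s)) (vector [1,0,0], 0) = 0"
proof -
  let ?Fb = "frechet_derivative \<beta> (at (g$3))" and ?Fd = "frechet_derivative \<delta> (at s)"
  have b: "(\<beta> has_derivative ?Fb) (at (fst (g, s) $ 3))"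
    using smooth_diff[OF sb, of "g$3"] by (simp add: frechet_derivative_works[symmetric])
  have d: "(\<delta> has_derivative ?Fd) (at (snd (g, s)))"
    using smooth_diff[OF sd, of s] by (simp add: frechet_derivative_works[symmetric])
  have b': "((\<lambda>z::(real^3) \<times> real. \<beta> (fst z $ 3)) has_derivative (\<lambda>v. ?Fb (fst v $ 3))) (at (g, s))"
    using diff_chain_at[OF hd_fst b] by (simp add: o_def)
  have d': "((\<lambda>z::(real^3) \<times> real. \<delta> (snd z)) has_derivative (\<lambda>v. ?Fd (snd v))) (at (g, s))"
    using diff_chain_at[OF bounded_linear_imp_has_derivative[OF bounded_linear_snd] d] by (simp add: o_def)
  have m: "((\<lambda>z::(real^3) \<times> real. \<beta> (fst z $ 3) * \<delta> (snd z)) has_derivative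
       (\<lambda>v. \<beta> (g$3) * ?Fd (snd v) + ?Fb (fst v $ 3) * \<delta> s)) (at (g, s))"
    using has_derivative_mult[OF b' d'] by simp
  have "(mu3 has_derivative (\<lambda>v. \<beta> (g$3) * ?Fd (snd v) + ?Fb (fst v $ 3) * \<delta> s)) (at (g, s))"
    by (rule has_derivative_transform_within_open[OF m open_Times[OF D open_UNIV]])
       (use gD eq in auto)
  then have F: "frechet_derivative mu3 (at (g, s)) = (\<lambda>v. \<beta> (g$3) * ?Fd (snd v) + ?Fb (fst v $ 3) * \<delta> s)"
    by (rule fd_eq)
  have l0: "?Fb 0 = 0" "?Fd 0 = 0"
    using linear_0 linear_frechet_derivative smooth_diff[OF sb] smooth_diff[OF sd] by blast+
  show "frechet_derivative mu3 (at (g, s)) (vector [0,1,0], 0) = 0"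
    "frechet_derivative mu3 (at (g, s)) (vector [1,0,0], 0) = 0"
    unfolding F by (simp_all add: l0)
qed


lemma Ck_antideriv:
  fixes F f :: "real \<Rightarrow> real"
  assumes dF: "\<forall>s. (F has_real_derivative f s) (at s)" and cf: "Ck_on k UNIV f"
  shows "Ck_on (Suc k) UNIV F"
proof -
  have "(\<lambda>x. frechet_derivative F (at x) b) = f" if "b \<in> Basis" for b
  proof -
    have "b = 1" using that by (simp add: Basis_real_def)
    then show ?thesis using fd_real_deriv(1)[OF dF[rule_format]] by (intro ext) simp
  qed
  moreover have "\<forall>x. F differentiable (at x)" using fd_real_deriv(2)[OF dF[rule_format]] by blast
  ultimately show ?thesis using cf by simp
qed

lemma Ck_all_antideriv:
  fixes F f :: "real \<Rightarrow> real"
  assumes dF: "\<forall>s. (F has_real_derivative f s) (at s)" and cf: "\<And>k. Ck_on k UNIV f"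
  shows "Ck_on k UNIV F"
  using Ck_antideriv[OF dF cf, of k] Ck_mono by blast

lemma dot_eq: "(\<lambda>y::(real^3) \<times> (real^3). fst y \<bullet> snd y) =
   (\<lambda>y. (y \<bullet> (axis 1 1, 0)) * (y \<bullet> (0, axis 1 1)) + ((y \<bullet> (axis 2 1, 0)) * (y \<bullet> (0, axis 2 1))
        + (y \<bullet> (axis 3 1, 0)) * (y \<bullet> (0, axis 3 1))))"
  by (rule ext) (simp only: inner_Pair_0 inner_axis, simp add: inner_vec_def sum_3)

lemma C_smooth:
  fixes D :: "(real^3) set" and \<beta> \<delta> \<Delta> B :: "real \<Rightarrow> real"
  assumes D: "open D" and sb: "smooth_on UNIV \<beta>" and sd: "smooth_on UNIV \<delta>" and nz: "\<forall>s. \<delta> s \<noteq> 0"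
    and dD: "\<forall>s. (\<Delta> has_real_derivative 1 / \<delta> s) (at s)"
    and dB: "\<forall>t. (B has_real_derivative \<beta> t) (at t)"
  shows "smooth_on (UNIV \<times> D) (\<lambda>(M, g). \<Delta> (M \<bullet> g) + B (g$3))"
  unfolding smooth_on_def
proof
  fix k
  have O: "open (UNIV \<times> D)" using D by (simp add: open_Times)
  have cD: "Ck_on k UNIV \<Delta>"
    by (rule Ck_all_antideriv[OF dD]) (use Ck_inverse[OF nz] sd in \<open>auto simp: smooth_on_def\<close>)
  have cB: "Ck_on k UNIV B"
    by (rule Ck_all_antideriv[OF dB]) (use sb in \<open>auto simp: smooth_on_def\<close>)
  have ip: "Ck_on k (UNIV \<times> D) (\<lambda>y::(real^3) \<times> (real^3). fst y \<bullet> snd y)"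
    unfolding dot_eq by (intro Ck_add[OF O] Ck_mult[OF O] Ck_inner)
  have e3: "(\<lambda>y::(real^3) \<times> (real^3). snd y $ 3) = (\<lambda>y. y \<bullet> (0, axis 3 1))"
    by (rule ext) (simp add: inner_Pair_0 inner_axis)
  have c3: "Ck_on k (UNIV \<times> D) (\<lambda>y::(real^3) \<times> (real^3). snd y $ 3)"
    unfolding e3 by (rule Ck_inner)
  have "Ck_on k (UNIV \<times> D) (\<lambda>y. \<Delta> (fst y \<bullet> snd y) + B (snd y $ 3))"
    by (rule Ck_add[OF O Ck_compose[OF O cD ip] Ck_compose[OF O cB c3]])
  then show "Ck_on k (UNIV \<times> D) (\<lambda>(M, g). \<Delta> (M \<bullet> g) + B (g$3))"
    by (simp add: case_prod_beta')
qed


lemma C_pd: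
  fixes \<beta> \<delta> \<Delta> B :: "real \<Rightarrow> real" and x :: "(real^3) \<times> (real^3)"
  assumes dD: "\<forall>s. (\<Delta> has_real_derivative 1 / \<delta> s) (at s)"
    and dB: "\<forall>t. (B has_real_derivative \<beta> t) (at t)"
  shows "pd j (\<lambda>(M, g). \<Delta> (M \<bullet> g) + B (g$3)) x
     = 1 / \<delta> (fst x \<bullet> snd x) * (fst x \<bullet> snd (e6 j) + fst (e6 j) \<bullet> snd x) + \<beta> (snd x $ 3) * snd (e6 j) $ 3"
proof -
  have i: "((\<lambda>y::(real^3) \<times> (real^3). fst y \<bullet> snd y) has_derivative (\<lambda>v. fst x \<bullet> snd v + fst v \<bullet> snd x)) (at x)"
    by (intro derivative_intros)
  have a: "(\<Delta> has_derivative (*) (1 / \<delta> (fst x \<bullet> snd x))) (at (fst x \<bullet> snd x))"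
    using dD by (simp add: has_field_derivative_def)
  have b: "(B has_derivative (*) (\<beta> (snd x $ 3))) (at (snd x $ 3))"
    using dB by (simp add: has_field_derivative_def)
  have h: "((\<lambda>y::(real^3) \<times> (real^3). \<Delta> (fst y \<bullet> snd y) + B (snd y $ 3)) has_derivative
     (\<lambda>v. 1 / \<delta> (fst x \<bullet> snd x) * (fst x \<bullet> snd v + fst v \<bullet> snd x) + \<beta> (snd x $ 3) * snd v $ 3)) (at x)"
    using has_derivative_add[OF diff_chain_at[OF i a] diff_chain_at[OF hd_snd b]] by (simp add: o_def)
  have "(\<lambda>(M, g). \<Delta> (M \<bullet> g) + B (g$3)) = (\<lambda>y::(real^3) \<times> (real^3). \<Delta> (fst y \<bullet> snd y) + B (snd y $ 3))"
    by (simp add: case_prod_beta')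
  then show ?thesis unfolding pd_def using fd_eq[OF h] by simp
qed

lemma casimir_rows:
  fixes D :: "(real^3) set" and mu3 :: "(real^3) \<times> real \<Rightarrow> real" and \<beta> \<delta> \<Delta> B :: "real \<Rightarrow> real"
  assumes nz: "\<forall>s. \<delta> s \<noteq> 0"
    and dD: "\<forall>s. (\<Delta> has_real_derivative 1 / \<delta> s) (at s)"
    and dB: "\<forall>t. (B has_real_derivative \<beta> t) (at t)"
    and eq: "\<forall>g\<in>D. \<forall>s. mu3 (g, s) = \<beta> (g$3) * \<delta> s"
    and x: "x \<in> UNIV \<times> D" and i: "i < 6"
  shows "(\<Sum>j<6. (Pi_mu (\<lambda>(M, g). vector [0, 0, mu3 (g, M \<bullet> g)]) x ! i ! j) * pd j (\<lambda>(M, g). \<Delta> (M \<bullet> g) + B (g$3)) x) = 0"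
proof -
  have m: "mu3 (snd x, fst x \<bullet> snd x) = \<beta> (snd x $ 3) * \<delta> (fst x \<bullet> snd x)" using eq x by auto
  have n: "\<delta> (fst x \<bullet> snd x) \<noteq> 0" using nz by blast
  show ?thesis
    using i unfolding less6 Pi_eq C_pd[OF dD dB] m
    by (elim disjE; simp add: lt6_set PL_def e6_simps e6_Suc0 inner_e field_simps n)
qed


theorem mainTheorem12:
  fixes D :: "(real^3) set" and mu3 :: "(real^3) \<times> real \<Rightarrow> real"
  assumes "open D" and "0 \<notin> D"
    and "smooth_on (D \<times> UNIV) mu3"
  shows "(defines_poisson (\<lambda>(M, g). vector [0, 0, mu3 (g, M \<bullet> g)]) (UNIV \<times> D) \<longleftrightarrow>
           (\<forall>g\<in>D. \<forall>s. g$1 * frechet_derivative mu3 (at (g, s)) (vector [0,1,0], 0)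
                      - g$2 * frechet_derivative mu3 (at (g, s)) (vector [1,0,0], 0) = 0))
       \<and> (\<forall>\<beta> \<delta> \<Delta> B :: real \<Rightarrow> real.
            smooth_on UNIV \<beta> \<and> smooth_on UNIV \<delta> \<and> (\<forall>s. \<delta> s \<noteq> 0)
            \<and> (\<forall>s. (\<Delta> has_real_derivative 1 / \<delta> s) (at s))
            \<and> (\<forall>t. (B has_real_derivative \<beta> t) (at t))
            \<and> (\<forall>g\<in>D. \<forall>s. mu3 (g, s) = \<beta> (g$3) * \<delta> s)
          \<longrightarrow> defines_poisson (\<lambda>(M, g). vector [0, 0, mu3 (g, M \<bullet> g)]) (UNIV \<times> D)
              \<and> casimir (\<lambda>(M, g). vector [0, 0, mu3 (g, M \<bullet> g)]) (UNIV \<times> D)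
                  (\<lambda>(M, g). \<Delta> (M \<bullet> g) + B (g$3)))"
  proof -
  have md: "\<And>g s. g \<in> D \<Longrightarrow> mu3 differentiable (at (g, s))"
    using mu3_diff[OF assms(3)] by blast
  have part1: "defines_poisson (\<lambda>(M, g). vector [0, 0, mu3 (g, M \<bullet> g)]) (UNIV \<times> D) \<longleftrightarrow>
           (\<forall>g\<in>D. \<forall>s. g$1 * frechet_derivative mu3 (at (g, s)) (vector [0,1,0], 0)
                      - g$2 * frechet_derivative mu3 (at (g, s)) (vector [1,0,0], 0) = 0)"
    using poisson_if[OF assms(1) md] poisson_only_if[OF assms(1,2) md] by blast
  have part2: "\<forall>\<beta> \<delta> \<Delta> B :: real \<Rightarrow> real.
            smooth_on UNIV \<beta> \<and> smooth_on UNIV \<delta> \<and> (\<forall>s. \<delta> s \<noteq> 0)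
            \<and> (\<forall>s. (\<Delta> has_real_derivative 1 / \<delta> s) (at s))
            \<and> (\<forall>t. (B has_real_derivative \<beta> t) (at t))
            \<and> (\<forall>g\<in>D. \<forall>s. mu3 (g, s) = \<beta> (g$3) * \<delta> s)
          \<longrightarrow> defines_poisson (\<lambda>(M, g). vector [0, 0, mu3 (g, M \<bullet> g)]) (UNIV \<times> D)
              \<and> casimir (\<lambda>(M, g). vector [0, 0, mu3 (g, M \<bullet> g)]) (UNIV \<times> D)
                  (\<lambda>(M, g). \<Delta> (M \<bullet> g) + B (g$3))"
  proof (intro allI impI)
    fix \<beta> \<delta> \<Delta> B :: "real \<Rightarrow> real"
    assume H: "smooth_on UNIV \<beta> \<and> smooth_on UNIV \<delta> \<and> (\<forall>s. \<delta> s \<noteq> 0)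
            \<and> (\<forall>s. (\<Delta> has_real_derivative 1 / \<delta> s) (at s))
            \<and> (\<forall>t. (B has_real_derivative \<beta> t) (at t))
            \<and> (\<forall>g\<in>D. \<forall>s. mu3 (g, s) = \<beta> (g$3) * \<delta> s)"
    then have sb: "smooth_on UNIV \<beta>" and sd: "smooth_on UNIV \<delta>" and nz: "\<forall>s. \<delta> s \<noteq> 0"
      and dD: "\<forall>s. (\<Delta> has_real_derivative 1 / \<delta> s) (at s)"
      and dB: "\<forall>t. (B has_real_derivative \<beta> t) (at t)"
      and eq: "\<forall>g\<in>D. \<forall>s. mu3 (g, s) = \<beta> (g$3) * \<delta> s" by auto
    have cond: "\<forall>g\<in>D. \<forall>s. g$1 * frechet_derivative mu3 (at (g, s)) (vector [0,1,0], 0)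
                      - g$2 * frechet_derivative mu3 (at (g, s)) (vector [1,0,0], 0) = 0"
      using prod_cond[OF assms(1) sb sd eq] by simp
    have P: "defines_poisson (\<lambda>(M, g). vector [0, 0, mu3 (g, M \<bullet> g)]) (UNIV \<times> D)"
      by (rule poisson_if[OF assms(1) md cond])
    have C: "casimir (\<lambda>(M, g). vector [0, 0, mu3 (g, M \<bullet> g)]) (UNIV \<times> D) (\<lambda>(M, g). \<Delta> (M \<bullet> g) + B (g$3))"
      unfolding casimir_def
      using C_smooth[OF assms(1) sb sd nz dD dB] casimir_rows[OF nz dD dB eq] by blast
    show "defines_poisson (\<lambda>(M, g). vector [0, 0, mu3 (g, M \<bullet> g)]) (UNIV \<times> D)
              \<and> casimir (\<lambda>(M, g). vector [0, 0, mu3 (g, M \<bullet> g)]) (UNIV \<times> D)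
                  (\<lambda>(M, g). \<Delta> (M \<bullet> g) + B (g$3))" using P C by blast
  qed
  show ?thesis using part1 part2 by blast
qed

end
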